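(* Let $R$ be a ring with unity and involution $*$, and let $a,b,c\in R$. The following statements are equivalent. (1) $a$ is left dual $(b,c)$-core invertible. (2) $R=(cab)^*R\oplus r(b)$. (3) $R=(cab)^*R+r(b)$.
   Context: An element $a\in R$ is called left dual $(b,c)$-core invertible if there exists $x\in Rc$ such that $bxab=b$ and $(xab)^*=xab$. For $b\in R$, $r(b)=\{s\in R: bs=0\}$ is the right annihilator of $b$. *)

theory Defs
  imports Main
begin

definition involution :: "('a::ring_1 \<Rightarrow> 'a) \<Rightarrow> bool" where
  "involution s \<longleftrightarrow>
     (\<forall>x y. s (x + y) = s x + s y) \<and>
     (\<forall>x y. s (x * y) = s y * s x) \<and>
     (\<forall>x. s (s x) = x)"

definition rann :: "'a::ring_1 \<Rightarrow> 'a set" where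
  "rann b = {s. b * s = 0}"

definition right_ideal_gen :: "'a::ring_1 \<Rightarrow> 'a set" where
  "right_ideal_gen x = {x * r | r. True}"

definition left_ideal_gen :: "'a::ring_1 \<Rightarrow> 'a set" where
  "left_ideal_gen c = {r * c | r. True}"

definition sum_eq_univ :: "'a::ring_1 set \<Rightarrow> 'a set \<Rightarrow> bool" where
  "sum_eq_univ M N \<longleftrightarrow> (\<forall>z. \<exists>m\<in>M. \<exists>n\<in>N. z = m + n)"

definition direct_sum_eq_univ :: "'a::ring_1 set \<Rightarrow> 'a set \<Rightarrow> bool" where
  "direct_sum_eq_univ M N \<longleftrightarrow> sum_eq_univ M N \<and> M \<inter> N = {0}"

definition left_dual_core_invertible ::
  "('a::ring_1 \<Rightarrow> 'a) \<Rightarrow> 'a \<Rightarrow> 'a \<Rightarrow> 'a \<Rightarrow> bool" where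
  "left_dual_core_invertible s a b c \<longleftrightarrow>
     (\<exists>x \<in> left_ideal_gen c. b * x * a * b = b \<and> s (x * a * b) = x * a * b)"

end

theory Submission
  imports Defs
begin

lemma inv_basic:
  fixes s :: "'a::ring_1 \<Rightarrow> 'a"
  assumes "involution s"
  shows "s (x + y) = s x + s y" "s (x * y) = s y * s x" "s (s x) = x"
    "s 0 = 0" "s (x - y) = s x - s y"
proof -
  have A: "\<And>x y. s (x + y) = s x + s y" and M: "\<And>x y. s (x * y) = s y * s x"
    and I: "\<And>x. s (s x) = x" using assms unfolding involution_def by auto
  show "s (x + y) = s x + s y" "s (x * y) = s y * s x" "s (s x) = x" by (rule A, rule M, rule I)
  have z: "s 0 = 0" using A[of 0 0] by simp
  show "s 0 = 0" by (rule z)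
  have "s (x - y) + s y = s x" using A[of "x - y" y] by simp
  then show "s (x - y) = s x - s y" by (simp add: eq_diff_eq)
qed

theorem theorem2p8:
  fixes s :: "'a::ring_1 \<Rightarrow> 'a" and a b c :: 'a
  assumes "involution s"
  shows "(left_dual_core_invertible s a b c
            \<longleftrightarrow> direct_sum_eq_univ (right_ideal_gen (s (c * a * b))) (rann b))
       \<and> (direct_sum_eq_univ (right_ideal_gen (s (c * a * b))) (rann b)
            \<longleftrightarrow> sum_eq_univ (right_ideal_gen (s (c * a * b))) (rann b))"
proof -
  note A = inv_basic(1)[OF assms] and M = inv_basic(2)[OF assms]
    and I = inv_basic(3)[OF assms] and Z = inv_basic(4)[OF assms] and D = inv_basic(5)[OF assms]
  define y where "y = c * a * b"
  have one: "s 1 = 1"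
  proof -
    have "s (s 1) = s (s 1 * 1)" by simp
    also have "\<dots> = s 1 * s (s 1)" by (rule M)
    finally have "1 = s 1 * 1" using I by simp
    then show ?thesis by simp
  qed
  have yn: "y * n = 0" if "n \<in> rann b" for n
    using that unfolding rann_def y_def by (simp add: mult.assoc)
  have s12: "sum_eq_univ (right_ideal_gen (s y)) (rann b) \<Longrightarrow>
             direct_sum_eq_univ (right_ideal_gen (s y)) (rann b)"
  proof -
    assume S: "sum_eq_univ (right_ideal_gen (s y)) (rann b)"
    have "m = 0" if m1: "m \<in> right_ideal_gen (s y)" and m2: "m \<in> rann b" for m
    proof -
      obtain w where w: "m = s y * w" using m1 unfolding right_ideal_gen_def by auto
      obtain e n where e: "e \<in> right_ideal_gen (s y)" and n: "n \<in> rann b" and en: "1 = e + n"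
        using S unfolding sum_eq_univ_def by blast
      obtain r where r: "e = s y * r" using e unfolding right_ideal_gen_def by auto
      have "y * m = 0" using yn[OF m2] .
      hence "s (y * m) = 0" using Z by simp
      hence q: "s w * y * s y = 0" using w M I by (simp add: mult.assoc)
      have "s m = s m * (s y * r + n)" using en r by simp
      also have "\<dots> = s w * y * s y * r + s w * y * n" using w M I
        by (simp add: distrib_left mult.assoc)
      also have "\<dots> = 0" using q yn[OF n] by (simp add: mult.assoc)
      finally have "s m = 0" .
      hence "s (s m) = 0" using Z by simp
      thus ?thesis using I by simp
    qed
    moreover have "0 \<in> right_ideal_gen (s y)" unfolding right_ideal_gen_def by (auto intro: exI[of _ 0])
    moreover have "0 \<in> rann b" unfolding rann_def by auto
    ultimately show ?thesis using S unfolding direct_sum_eq_univ_def by blast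
  qed
  have s21: "direct_sum_eq_univ (right_ideal_gen (s y)) (rann b) \<Longrightarrow>
             left_dual_core_invertible s a b c"
  proof -
    assume S: "direct_sum_eq_univ (right_ideal_gen (s y)) (rann b)"
    obtain e n where e: "e \<in> right_ideal_gen (s y)" and n: "n \<in> rann b" and en: "1 = e + n"
      using S unfolding sum_eq_univ_def direct_sum_eq_univ_def by blast
    obtain r where r: "e = s y * r" using e unfolding right_ideal_gen_def by auto
    have bn: "b * n = 0" using n unfolding rann_def by simp
    have be: "b * e = b" using en bn by (metis add_diff_cancel_right' diff_zero mult.right_neutral right_diff_distrib)
    have "e * e - e = s y * (r * e - r)" using r by (simp add: algebra_simps)
    hence "e * e - e \<in> right_ideal_gen (s y)" unfolding right_ideal_gen_def by blast
    moreover have "b * (e * e - e) = 0" using be by (simp add: right_diff_distrib mult.assoc[symmetric])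
    hence "e * e - e \<in> rann b" unfolding rann_def by simp
    ultimately have "e * e - e = 0" using S unfolding direct_sum_eq_univ_def by blast
    have se: "s e = s r * y" using r M I by simp
    have "s e * n = 0" using se yn[OF n] by (simp add: mult.assoc)
    moreover have "1 - e = n" using en by (simp add: algebra_simps)
    ultimately have "s e * (1 - e) = 0" by simp
    hence "s e = s e * e" by (simp add: right_diff_distrib)
    hence "s (s e) = s (s e * e)" by simp
    hence "e = s e * e" using M I by simp
    hence herm: "s e = e" using \<open>s e = s e * e\<close> by simp
    define x where "x = s r * c"
    have xl: "x \<in> left_ideal_gen c" unfolding x_def left_ideal_gen_def by blast
    have xab: "x * a * b = e" using herm se unfolding x_def y_def by (simp add: mult.assoc)
    show ?thesis unfolding left_dual_core_invertible_def
      using xl xab be herm by (auto simp: mult.assoc)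
  qed
  have s1d: "left_dual_core_invertible s a b c \<Longrightarrow>
             direct_sum_eq_univ (right_ideal_gen (s y)) (rann b)"
  proof -
    assume L: "left_dual_core_invertible s a b c"
    obtain x where xl: "x \<in> left_ideal_gen c" and bx: "b * x * a * b = b"
      and h: "s (x * a * b) = x * a * b" using L unfolding left_dual_core_invertible_def by blast
    obtain t where t: "x = t * c" using xl unfolding left_ideal_gen_def by auto
    define p where "p = x * a * b"
    have pp: "p = t * y" unfolding p_def t y_def by (simp add: mult.assoc)
    have bp: "b * p = b" using bx unfolding p_def by (simp add: mult.assoc)
    have sp: "s p = p" using h unfolding p_def .
    have "sum_eq_univ (right_ideal_gen (s y)) (rann b)"
      unfolding sum_eq_univ_def
    proof
      fix z
      have "p * z = s y * (s t * z)" using sp pp M by (metis mult.assoc)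
      hence "p * z \<in> right_ideal_gen (s y)" unfolding right_ideal_gen_def by blast
      moreover have "b * (z - p * z) = 0" using bp by (simp add: right_diff_distrib mult.assoc[symmetric])
      hence "z - p * z \<in> rann b" unfolding rann_def by simp
      ultimately show "\<exists>m\<in>right_ideal_gen (s y). \<exists>n\<in>rann b. z = m + n" by force
    qed
    thus ?thesis using s12 by blast
  qed
  show ?thesis
    unfolding y_def[symmetric]
    using s12 s21 s1d unfolding direct_sum_eq_univ_def by blast
qed

end
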